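(* Let $n=n_1+\cdots+n_s$ with $n_i\ge 1$ and let $M=Sp(n)/U(n_1)\times\cdots\times U(n_s)$ be the corresponding flag manifold. Then the set $\Pi_{\mathfrak t}$ of t-roots of $M$ is a root system of type $C_s$.
   Context: Let $\mathfrak g=\mathfrak{sp}(n,\mathbb C)$ with Cartan subalgebra $\mathfrak h$ of diagonal matrices $\mathrm{diag}(\varepsilon_1,\dots,\varepsilon_n,-\varepsilon_1,\dots,-\varepsilon_n)$, and root system $\Pi=\{\pm(\varepsilon_i\pm\varepsilon_j):1\le i<j\le n\}\cup\{\pm2\varepsilon_i\}$. Write $\varepsilon^i_a=\varepsilon_{n_1+\cdots+n_{i-1}+a}$, $1\le a\le n_i$. The isotropy subalgebra of $M$ has complexification $\mathfrak k^{\mathbb C}=\mathfrak h\oplus\bigoplus_{\alpha\in\Pi_\Theta}\mathfrak g_\alpha$, where $\Pi_\Theta=\{\pm(\varepsilon^i_a-\varepsilon^i_b):1\le i\le s,\ 1\le a<b\le n_i\}$; let $\Pi_M=\Pi\setminus\Pi_\Theta$. Let $\mathfrak h_{\mathbb R}$ be the real span of the coroots $H_\alpha$ and $\mathfrak t=\{H\in i\mathfrak h_{\mathbb R}:\alpha(H)=0\text{ for all }\alpha\in\Pi_\Theta\}$. With $k:(i\mathfrak h_{\mathbb R})^*\to\mathfrak t^*$ the restriction map, the t-roots are $\Pi_{\mathfrak t}=k(\Pi_M)$. *)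

theory Defs
  imports Complex_Main "HOL-Library.FuncSet"
begin

text \<open>Model: i h_R is identified with real vectors x = (x_0,...,x_{n-1}) (functions
nat => real vanishing from n on), x_k being the value of epsilon_{k+1}.\<close>

type_synonym vec = "nat \<Rightarrow> real"
type_synonym functional = "vec \<Rightarrow> real"

definition ambient :: "nat \<Rightarrow> vec set" where
  "ambient n = {x. \<forall>k. n \<le> k \<longrightarrow> x k = 0}"

definition sp_roots :: "nat \<Rightarrow> functional set" where
  "sp_roots n =
     {(\<lambda>x. \<sigma> * x i + \<tau> * x j) | i j \<sigma> \<tau>. i < j \<and> j < n \<and> \<sigma> \<in> {1, -1} \<and> \<tau> \<in> {1, -1}}
   \<union> {(\<lambda>x. \<sigma> * 2 * x i) | i \<sigma>. i < n \<and> \<sigma> \<in> {1, -1}}"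

text \<open>Index of eps^i_a (0-based i and a): n_1+...+n_{i-1}+a.\<close>
definition eps_idx :: "nat list \<Rightarrow> nat \<Rightarrow> nat \<Rightarrow> nat" where
  "eps_idx ns i a = sum_list (take i ns) + a"

definition Pi_Theta :: "nat list \<Rightarrow> functional set" where
  "Pi_Theta ns =
     {(\<lambda>x. \<sigma> * (x (eps_idx ns i a) - x (eps_idx ns i b))) | i a b \<sigma>.
        i < length ns \<and> a < b \<and> b < ns ! i \<and> \<sigma> \<in> {1, -1}}"

definition Pi_M :: "nat list \<Rightarrow> functional set" where
  "Pi_M ns = sp_roots (sum_list ns) - Pi_Theta ns"

definition tspace :: "nat list \<Rightarrow> vec set" where
  "tspace ns = {x \<in> ambient (sum_list ns). \<forall>\<alpha>\<in>Pi_Theta ns. \<alpha> x = 0}"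

definition kres :: "nat list \<Rightarrow> functional \<Rightarrow> functional" where
  "kres ns \<alpha> = restrict \<alpha> (tspace ns)"

definition t_roots :: "nat list \<Rightarrow> functional set" where
  "t_roots ns = kres ns ` Pi_M ns"

text \<open>A set R of linear functionals on a real subspace T is a root system of type C_s
  if there is a linear isomorphism L : T -> R^s such that R is exactly the set of
  pullbacks (restricted to T) of the standard C_s roots pm(e_i pm e_j), pm 2 e_i
  (i.e. the dual isomorphism R^s* -> T^* carries the standard C_s system onto R).\<close>
definition root_system_C :: "vec set \<Rightarrow> functional set \<Rightarrow> nat \<Rightarrow> bool" where
  "root_system_C T R s \<longleftrightarrow>
     (\<exists>L :: vec \<Rightarrow> vec.
        (\<forall>x\<in>T. \<forall>y\<in>T. L (\<lambda>k. x k + y k) = (\<lambda>k. L x k + L y k)) \<and>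
        (\<forall>c. \<forall>x\<in>T. L (\<lambda>k. c * x k) = (\<lambda>k. c * L x k)) \<and>
        bij_betw L T (ambient s) \<and>
        R = {restrict (\<beta> \<circ> L) T | \<beta>. \<beta> \<in> sp_roots s})"

end

theory Submission
  imports Defs
begin

fun blk :: "nat list \<Rightarrow> nat \<Rightarrow> nat" where
  "blk [] k = 0"
| "blk (m#ms) k = (if k < m then 0 else Suc (blk ms (k - m)))"

lemma eps_0[simp]: "eps_idx (m#ms) 0 a = a"
  by (simp add: eps_idx_def)
lemma eps_Suc[simp]: "eps_idx (m#ms) (Suc i) a = m + eps_idx ms i a"
  by (simp add: eps_idx_def)

lemma eps_lt: "i < length ns \<Longrightarrow> a < ns!i \<Longrightarrow> eps_idx ns i a < sum_list ns"
proof (induction ns arbitrary: i)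
  case Nil then show ?case by simp
next
  case (Cons m ms) then show ?case by (cases i) auto
qed

lemma blk_eps: "i < length ns \<Longrightarrow> a < ns!i \<Longrightarrow> blk ns (eps_idx ns i a) = i"
proof (induction ns arbitrary: i)
  case Nil then show ?case by simp
next
  case (Cons m ms) then show ?case by (cases i) auto
qed

lemma blk_decomp: "k < sum_list ns \<Longrightarrow> blk ns k < length ns \<and> (\<exists>a < ns!(blk ns k). k = eps_idx ns (blk ns k) a)"
proof (induction ns arbitrary: k)
  case Nil then show ?case by simp
next
  case (Cons m ms)
  show ?case
  proof (cases "k < m")
    case True then show ?thesis by auto
  next
    case False
    then have "k - m < sum_list ms" using Cons.prems by simp
    from Cons.IH[OF this] obtain a where "blk ms (k-m) < length ms" "a < ms!(blk ms (k-m))"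
      "k - m = eps_idx ms (blk ms (k-m)) a" by blast
    then show ?thesis using False by auto
  qed
qed

lemma eps_mono: "i < j \<Longrightarrow> j < length ns \<Longrightarrow> \<forall>m\<in>set ns. 1 \<le> m \<Longrightarrow> eps_idx ns i 0 < eps_idx ns j 0"
proof (induction ns arbitrary: i j)
  case Nil then show ?case by simp
next
  case (Cons m ms)
  then obtain j' where j: "j = Suc j'" by (cases j) auto
  show ?case
  proof (cases i)
    case 0 then show ?thesis using Cons.prems j by auto
  next
    case (Suc i') then show ?thesis using Cons j by auto
  qed
qed

lemma tspace_iff:
  "x \<in> tspace ns \<longleftrightarrow> x \<in> ambient (sum_list ns) \<and> (\<forall>k<sum_list ns. x k = x (eps_idx ns (blk ns k) 0))"
proof
  assume x: "x \<in> tspace ns"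
  show "x \<in> ambient (sum_list ns) \<and> (\<forall>k<sum_list ns. x k = x (eps_idx ns (blk ns k) 0))"
  proof (intro conjI allI impI)
    show "x \<in> ambient (sum_list ns)" using x by (simp add: tspace_def)
    fix k assume k: "k < sum_list ns"
    from blk_decomp[OF k] obtain a where a: "blk ns k < length ns" "a < ns!(blk ns k)"
      "k = eps_idx ns (blk ns k) a" by blast
    show "x k = x (eps_idx ns (blk ns k) 0)"
    proof (cases "a = 0")
      case True then show ?thesis using a by simp
    next
      case False
      let ?i = "blk ns k"
      have "(\<lambda>x. 1 * (x (eps_idx ns ?i 0) - x (eps_idx ns ?i a))) \<in> Pi_Theta ns"
        unfolding Pi_Theta_def using a False by blast
      moreover have h: "\<forall>\<alpha>\<in>Pi_Theta ns. \<alpha> x = 0" using x by (simp add: tspace_def)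
      ultimately have "1 * (x (eps_idx ns ?i 0) - x (eps_idx ns ?i a)) = 0"
        using h by fastforce
      then show ?thesis using a by simp
    qed
  qed
next
  assume x: "x \<in> ambient (sum_list ns) \<and> (\<forall>k<sum_list ns. x k = x (eps_idx ns (blk ns k) 0))"
  have "\<alpha> x = 0" if "\<alpha> \<in> Pi_Theta ns" for \<alpha>
  proof -
    from that obtain i a b \<sigma> where h: "\<alpha> = (\<lambda>x. \<sigma> * (x (eps_idx ns i a) - x (eps_idx ns i b)))"
      "i < length ns" "a < b" "b < ns ! i" unfolding Pi_Theta_def by blast
    have "x (eps_idx ns i a) = x (eps_idx ns i 0)"
      using x eps_lt[of i ns a] blk_eps[of i ns a] h by auto
    moreover have "x (eps_idx ns i b) = x (eps_idx ns i 0)"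
      using x eps_lt[of i ns b] blk_eps[of i ns b] h by auto
    ultimately show ?thesis using h by simp
  qed
  then show "x \<in> tspace ns" using x unfolding tspace_def by blast
qed

lemma theta_test: "\<alpha> \<in> Pi_Theta ns \<Longrightarrow> \<alpha> (\<lambda>k. real (blk ns k) + 1) = 0"
  unfolding Pi_Theta_def by (auto simp: blk_eps)

lemma restrict_eqI: "(\<And>x. x \<in> T \<Longrightarrow> f x = g x) \<Longrightarrow> restrict f T = restrict g T"
  by (rule ext) (simp add: restrict_def)

theorem theorem2p7:
  fixes ns :: "nat list"
  assumes "ns \<noteq> []"
    and "\<forall>m\<in>set ns. 1 \<le> m"
  shows "root_system_C (tspace ns) (t_roots ns) (length ns)"
proof -
  define s where "s = length ns"
  define n where "n = sum_list ns"
  define T where "T = tspace ns"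
  define L :: "vec \<Rightarrow> vec" where "L = (\<lambda>x i. if i < s then x (eps_idx ns i 0) else 0)"
  have pos: "\<And>i. i < s \<Longrightarrow> 0 < ns ! i" using assms(2) unfolding s_def
    by (metis nth_mem less_le_trans zero_less_one)
  have e0: "\<And>i. i < s \<Longrightarrow> eps_idx ns i 0 < n" using eps_lt pos unfolding n_def s_def by blast
  have b0: "\<And>i. i < s \<Longrightarrow> blk ns (eps_idx ns i 0) = i" using blk_eps pos unfolding s_def by blast
  have T: "\<And>x. x \<in> T \<longleftrightarrow> x \<in> ambient n \<and> (\<forall>k<n. x k = x (eps_idx ns (blk ns k) 0))"
    unfolding T_def n_def by (rule tspace_iff)
  have Tval: "\<And>x k. x \<in> T \<Longrightarrow> k < n \<Longrightarrow> x k = L x (blk ns k)"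
    using T blk_decomp unfolding L_def n_def s_def by auto
  have inj: "inj_on L T"
  proof (rule inj_onI)
    fix x y assume xy: "x \<in> T" "y \<in> T" "L x = L y"
    show "x = y"
    proof
      fix k show "x k = y k"
      proof (cases "k < n")
        case True then show ?thesis using Tval xy by metis
      next
        case False then show ?thesis using xy T unfolding ambient_def by auto
      qed
    qed
  qed
  have img: "L ` T = ambient s"
  proof
    show "L ` T \<subseteq> ambient s" unfolding L_def ambient_def by auto
    show "ambient s \<subseteq> L ` T"
    proof
      fix y assume y: "y \<in> ambient s"
      define x where "x = (\<lambda>k. if k < n then y (blk ns k) else 0)"
      have "x \<in> T" unfolding T
      proof (intro conjI allI impI)
        show "x \<in> ambient n" unfolding x_def ambient_def by auto
        fix k assume k: "k < n"
        then have "blk ns k < s" using blk_decomp unfolding n_def s_def by blast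
        then show "x k = x (eps_idx ns (blk ns k) 0)" using k e0 b0 unfolding x_def by auto
      qed
      moreover have "L x = y"
      proof
        fix i show "L x i = y i"
          using y e0 b0 unfolding L_def x_def ambient_def by auto
      qed
      ultimately show "y \<in> L ` T" by blast
    qed
  qed
  have roots: "t_roots ns = {restrict (\<beta> \<circ> L) T | \<beta>. \<beta> \<in> sp_roots s}"
  proof
    show "t_roots ns \<subseteq> {restrict (\<beta> \<circ> L) T | \<beta>. \<beta> \<in> sp_roots s}"
    proof
      fix r assume "r \<in> t_roots ns"
      then obtain \<alpha> where r: "r = restrict \<alpha> T" and a1: "\<alpha> \<in> sp_roots n" and a2: "\<alpha> \<notin> Pi_Theta ns"
        unfolding t_roots_def kres_def Pi_M_def T_def n_def by blast
      from a1[unfolded sp_roots_def] show "r \<in> {restrict (\<beta> \<circ> L) T | \<beta>. \<beta> \<in> sp_roots s}"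
      proof (elim UnE CollectE exE conjE)
        fix p q \<sigma> \<tau> assume A: "\<alpha> = (\<lambda>x. \<sigma> * x p + \<tau> * x q)" "p < q" "q < n"
          "\<sigma> \<in> {1, -1}" "\<tau> \<in> {1, -1}"
        define i where "i = blk ns p"
        define j where "j = blk ns q"
        obtain a where a: "i < s" "a < ns!i" "p = eps_idx ns i a"
          using blk_decomp[of p ns] A unfolding i_def s_def n_def by auto
        obtain b where b: "j < s" "b < ns!j" "q = eps_idx ns j b"
          using blk_decomp[of q ns] A unfolding j_def s_def n_def by auto
        have val: "\<And>x. x \<in> T \<Longrightarrow> \<alpha> x = \<sigma> * L x i + \<tau> * L x j"
          using A Tval unfolding i_def j_def n_def by auto
        consider "i < j" | "j < i" | "i = j" "\<sigma> = \<tau>" | "i = j" "\<tau> = - \<sigma>"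
          using A by (cases i j rule: linorder_cases) auto
        then show ?thesis
        proof cases
          case 1
          let ?\<beta> = "\<lambda>y. \<sigma> * y i + \<tau> * y j"
          have "?\<beta> \<in> sp_roots s" unfolding sp_roots_def using 1 A b by blast
          moreover have "r = restrict (?\<beta> \<circ> L) T" unfolding r by (rule restrict_eqI) (simp add: val)
          ultimately show ?thesis by blast
        next
          case 2
          let ?\<beta> = "\<lambda>y. \<tau> * y j + \<sigma> * y i"
          have "?\<beta> \<in> sp_roots s" unfolding sp_roots_def using 2 A a by blast
          moreover have "r = restrict (?\<beta> \<circ> L) T" unfolding r by (rule restrict_eqI) (simp add: val)
          ultimately show ?thesis by blast
        next
          case 3
          let ?\<beta> = "\<lambda>y. \<sigma> * 2 * y i"
          have "?\<beta> \<in> sp_roots s" unfolding sp_roots_def using 3 A a by blast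
          moreover have "r = restrict (?\<beta> \<circ> L) T" unfolding r by (rule restrict_eqI) (simp add: val 3)
          ultimately show ?thesis by blast
        next
          case 4
          have "a < b" using A(2) a b 4 by (simp add: eps_idx_def)
          have "\<alpha> = (\<lambda>x. \<sigma> * (x (eps_idx ns i a) - x (eps_idx ns i b)))"
            using A 4 a b by (auto simp: algebra_simps)
          moreover have "i < length ns" using a s_def by simp
          ultimately have "\<alpha> \<in> Pi_Theta ns" unfolding Pi_Theta_def
            using \<open>a < b\<close> b 4 A by blast
          with a2 show ?thesis by blast
        qed
      next
        fix p \<sigma> assume A: "\<alpha> = (\<lambda>x. \<sigma> * 2 * x p)" "p < n" "\<sigma> \<in> {1, -1}"
        define i where "i = blk ns p"
        have i: "i < s" using blk_decomp[of p ns] A unfolding i_def s_def n_def by auto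
        let ?\<beta> = "\<lambda>y. \<sigma> * 2 * y i"
        have "?\<beta> \<in> sp_roots s" unfolding sp_roots_def using i A by blast
        moreover have "r = restrict (?\<beta> \<circ> L) T" unfolding r
          by (rule restrict_eqI) (simp add: A Tval i_def)
        ultimately show ?thesis by blast
      qed
    qed
    show "{restrict (\<beta> \<circ> L) T | \<beta>. \<beta> \<in> sp_roots s} \<subseteq> t_roots ns"
    proof
      fix r assume "r \<in> {restrict (\<beta> \<circ> L) T | \<beta>. \<beta> \<in> sp_roots s}"
      then obtain \<beta> where r: "r = restrict (\<beta> \<circ> L) T" and b: "\<beta> \<in> sp_roots s" by blast
      have key: "r \<in> t_roots ns" if "\<alpha> \<in> sp_roots n" "\<alpha> (\<lambda>k. real (blk ns k) + 1) \<noteq> 0"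
        "\<And>x. x \<in> T \<Longrightarrow> \<alpha> x = \<beta> (L x)" for \<alpha>
      proof -
        have "\<alpha> \<in> Pi_M ns" using that theta_test unfolding Pi_M_def n_def by blast
        moreover have "r = kres ns \<alpha>" unfolding r kres_def T_def[symmetric]
          by (rule restrict_eqI) (simp add: that(3))
        ultimately show ?thesis unfolding t_roots_def by blast
      qed
      from b[unfolded sp_roots_def] show "r \<in> t_roots ns"
      proof (elim UnE CollectE exE conjE)
        fix i j \<sigma> \<tau> assume A: "\<beta> = (\<lambda>x. \<sigma> * x i + \<tau> * x j)" "i < j" "j < s"
          "\<sigma> \<in> {1, -1}" "\<tau> \<in> {1, -1}"
        show ?thesis
        proof (rule key[of "\<lambda>x. \<sigma> * x (eps_idx ns i 0) + \<tau> * x (eps_idx ns j 0)"])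
          have "eps_idx ns i 0 < eps_idx ns j 0" using eps_mono A assms(2) unfolding s_def by blast
          then show "(\<lambda>x. \<sigma> * x (eps_idx ns i 0) + \<tau> * x (eps_idx ns j 0)) \<in> sp_roots n"
            unfolding sp_roots_def using A e0 by blast
          have "i < s" using A by simp
          then show "(\<lambda>x. \<sigma> * x (eps_idx ns i 0) + \<tau> * x (eps_idx ns j 0)) (\<lambda>k. real (blk ns k) + 1) \<noteq> 0"
            using A b0 by auto
          show "\<And>x. x \<in> T \<Longrightarrow> (\<lambda>x. \<sigma> * x (eps_idx ns i 0) + \<tau> * x (eps_idx ns j 0)) x = \<beta> (L x)"
            using A unfolding L_def by auto
        qed
      next
        fix i \<sigma> assume A: "\<beta> = (\<lambda>x. \<sigma> * 2 * x i)" "i < s" "\<sigma> \<in> {1, -1}"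
        show ?thesis
        proof (rule key[of "\<lambda>x. \<sigma> * 2 * x (eps_idx ns i 0)"])
          show "(\<lambda>x. \<sigma> * 2 * x (eps_idx ns i 0)) \<in> sp_roots n"
            unfolding sp_roots_def using A e0 by blast
          show "(\<lambda>x. \<sigma> * 2 * x (eps_idx ns i 0)) (\<lambda>k. real (blk ns k) + 1) \<noteq> 0"
            using A b0 by auto
          show "\<And>x. x \<in> T \<Longrightarrow> (\<lambda>x. \<sigma> * 2 * x (eps_idx ns i 0)) x = \<beta> (L x)"
            using A unfolding L_def by auto
        qed
      qed
    qed
  qed
  show ?thesis
    unfolding root_system_C_def
    apply (rule exI[of _ L])
    using inj img roots unfolding L_def T_def s_def bij_betw_def by auto
qed

end
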